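(* Let $B\in M_n(\mathbb{Z})$, $B'\in M_{n'}(\mathbb{Z})$ be skew-symmetric and let $R\in M_{n',n}(\mathbb{Z}_{\ge0})$ satisfy ${}^tR\,B'\,R=B$. Then the algebra homomorphism $\psi_R:\mathcal{S}_B\to\mathcal{S}_{B'}$, $\psi_R(y_i)=\,:y'^{Rv_i}:$, is continuous with respect to the degree topologies if and only if every column of $R$ contains a nonzero entry.
   Context: For skew-symmetric $B\in M_n(\mathbb{Z})$, $\mathcal{S}_B$ is the skew polynomial algebra over $\mathbb{Q}(q)$ with basis the monomials $y^{\bf m}=y_1^{m_1}\cdots y_n^{m_n}$, ${\bf m}\in\mathbb{Z}_{\ge0}^n$, and multiplication determined by $y_iy_j=q^{2b_{ij}}y_jy_i$; similarly $\mathcal{S}_{B'}$ with generators $y'_k$. Normal ordering: $:y^{\bf m}:=q^{{}^t{\bf m}L{\bf m}}y^{\bf m}$ with $L$ the strictly lower triangular part of $B$ (similarly for $B'$). The degree topology on $\mathcal{S}_B$ is the linear topology whose basic neighbourhoods of $0$ are the spans of monomials of total degree $m_1+\dots+m_n\ge N$, $N\ge0$; its completion is the skew formal power series algebra $\widehat{\mathcal{S}_B}$. $v_i$ is the $i$-th unit vector. *)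

theory Defs
  imports "HOL-Analysis.Analysis" "HOL-Computational_Algebra.Fraction_Field"
    "HOL-Computational_Algebra.Polynomial"
begin

(* Base field Q(q) = fraction field of Q[q]; indices are 0-based: y_0,...,y_{n-1}. *)
type_synonym qq = "rat poly fract"

definition qvar :: qq where "qvar = Fract [:0, 1:] 1"

type_synonym mon = "nat \<Rightarrow> nat"

definition mons :: "nat \<Rightarrow> mon set" where
  "mons n = {m. \<forall>i\<ge>n. m i = 0}"

definition madd :: "mon \<Rightarrow> mon \<Rightarrow> mon" where
  "madd a b = (\<lambda>k. a k + b k)"

definition mdeg :: "nat \<Rightarrow> mon \<Rightarrow> nat" where
  "mdeg n m = (\<Sum>i<n. m i)"

(* elements of S_B: finitely supported coefficient functions on monomials *)
type_synonym elt = "mon \<Rightarrow> qq"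

definition supp :: "elt \<Rightarrow> mon set" where
  "supp f = {m. f m \<noteq> 0}"

definition SB :: "nat \<Rightarrow> elt set" where
  "SB n = {f. finite (supp f) \<and> supp f \<subseteq> mons n}"

definition skew_symmetric :: "nat \<Rightarrow> (nat \<Rightarrow> nat \<Rightarrow> int) \<Rightarrow> bool" where
  "skew_symmetric n B = (\<forall>i<n. \<forall>j<n. B i j = - B j i)"

(* y^a y^b = q^(2 sum_{i>j} b_ij a_i b_j) y^(a+b), from y_i y_j = q^(2 b_ij) y_j y_i *)
definition twist :: "(nat \<Rightarrow> nat \<Rightarrow> int) \<Rightarrow> nat \<Rightarrow> mon \<Rightarrow> mon \<Rightarrow> qq" where
  "twist B n a b = qvar powi (2 * (\<Sum>i<n. \<Sum>j<i. B i j * int (a i) * int (b j)))"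

definition smul :: "(nat \<Rightarrow> nat \<Rightarrow> int) \<Rightarrow> nat \<Rightarrow> elt \<Rightarrow> elt \<Rightarrow> elt" where
  "smul B n f g = (\<lambda>m. \<Sum>p\<in>{(a, b). a \<in> supp f \<and> b \<in> supp g \<and> madd a b = m}.
       f (fst p) * g (snd p) * twist B n (fst p) (snd p))"

definition mono :: "mon \<Rightarrow> elt" where
  "mono m = (\<lambda>k. if k = m then 1 else 0)"

definition sone :: elt where "sone = mono (\<lambda>_. 0)"

definition scal :: "qq \<Rightarrow> elt \<Rightarrow> elt" where
  "scal c f = (\<lambda>m. c * f m)"

definition spow :: "(nat \<Rightarrow> nat \<Rightarrow> int) \<Rightarrow> nat \<Rightarrow> elt \<Rightarrow> nat \<Rightarrow> elt" where
  "spow B n x k = ((smul B n x) ^^ k) sone"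

(* normal ordering :y^m: = q^(m^t L m) y^m, L strictly lower triangular part of B *)
definition nord :: "(nat \<Rightarrow> nat \<Rightarrow> int) \<Rightarrow> nat \<Rightarrow> mon \<Rightarrow> elt" where
  "nord B n m = scal (qvar powi (\<Sum>i<n. \<Sum>j<i. int (m i) * B i j * int (m j))) (mono m)"

definition col :: "(nat \<Rightarrow> nat \<Rightarrow> nat) \<Rightarrow> nat \<Rightarrow> nat \<Rightarrow> mon" where
  "col R n' i = (\<lambda>k. if k < n' then R k i else 0)"

(* image of y^m = y_0^{m_0} ... y_{n-1}^{m_{n-1}} under the algebra hom y_i \<mapsto> :y'^{R v_i}: *)
definition psi_mon :: "(nat \<Rightarrow> nat \<Rightarrow> int) \<Rightarrow> nat \<Rightarrow> (nat \<Rightarrow> nat \<Rightarrow> nat) \<Rightarrow> nat \<Rightarrow> mon \<Rightarrow> elt" where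
  "psi_mon B' n' R n m =
     foldl (\<lambda>acc i. smul B' n' acc (spow B' n' (nord B' n' (col R n' i)) (m i))) sone [0..<n]"

definition psi :: "(nat \<Rightarrow> nat \<Rightarrow> int) \<Rightarrow> nat \<Rightarrow> (nat \<Rightarrow> nat \<Rightarrow> nat) \<Rightarrow> nat \<Rightarrow> elt \<Rightarrow> elt" where
  "psi B' n' R n f = (\<lambda>k. \<Sum>m\<in>supp f. f m * psi_mon B' n' R n m k)"

definition nbhd :: "nat \<Rightarrow> nat \<Rightarrow> elt set" where
  "nbhd n N = {f \<in> SB n. \<forall>m \<in> supp f. N \<le> mdeg n m}"

definition degtop :: "nat \<Rightarrow> elt topology" where
  "degtop n = topology (\<lambda>U. U \<subseteq> SB n \<and>
      (\<forall>f\<in>U. \<exists>N. \<forall>g\<in>nbhd n N. (\<lambda>m. f m + g m) \<in> U))"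

end

theory Submission
  imports Defs
begin

lemma nbhd_SB: "nbhd n N \<subseteq> SB n" by (auto simp: nbhd_def)

lemma nbhd_anti: "N \<le> M \<Longrightarrow> nbhd n M \<subseteq> nbhd n N"
  by (auto simp: nbhd_def)

lemma supp_add: "supp (\<lambda>m. f m + g m) \<subseteq> supp f \<union> supp g"
  by (auto simp: supp_def)

lemma SB_add: "f \<in> SB n \<Longrightarrow> g \<in> SB n \<Longrightarrow> (\<lambda>m. f m + g m) \<in> SB n"
  unfolding SB_def using supp_add[of f g]
  by (auto intro: finite_subset)

lemma istop_deg: "istopology (\<lambda>U. U \<subseteq> SB n \<and>
      (\<forall>f\<in>U. \<exists>N. \<forall>g\<in>nbhd n N. (\<lambda>m. f m + g m) \<in> U))"
proof (simp only: istopology_def, intro conjI allI impI)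
  fix S T :: "elt set"
  assume S: "S \<subseteq> SB n \<and> (\<forall>f\<in>S. \<exists>N. \<forall>g\<in>nbhd n N. (\<lambda>m. f m + g m) \<in> S)"
    and T: "T \<subseteq> SB n \<and> (\<forall>f\<in>T. \<exists>N. \<forall>g\<in>nbhd n N. (\<lambda>m. f m + g m) \<in> T)"
  show "S \<inter> T \<subseteq> SB n" using S by blast
  show "\<forall>f\<in>S \<inter> T. \<exists>N. \<forall>g\<in>nbhd n N. (\<lambda>m. f m + g m) \<in> S \<inter> T"
  proof
    fix f assume f: "f \<in> S \<inter> T"
    then obtain N1 N2 where 1: "\<forall>g\<in>nbhd n N1. (\<lambda>m. f m + g m) \<in> S"
      and 2: "\<forall>g\<in>nbhd n N2. (\<lambda>m. f m + g m) \<in> T" using S T by blast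
    have "\<forall>g\<in>nbhd n (max N1 N2). (\<lambda>m. f m + g m) \<in> S \<inter> T"
      using 1 2 nbhd_anti[of N1 "max N1 N2" n] nbhd_anti[of N2 "max N1 N2" n] by auto
    then show "\<exists>N. \<forall>g\<in>nbhd n N. (\<lambda>m. f m + g m) \<in> S \<inter> T" by blast
  qed
next
  fix K :: "elt set set"
  assume K: "\<forall>U\<in>K. U \<subseteq> SB n \<and> (\<forall>f\<in>U. \<exists>N. \<forall>g\<in>nbhd n N. (\<lambda>m. f m + g m) \<in> U)"
  show "\<Union>K \<subseteq> SB n" using K by blast
  show "\<forall>f\<in>\<Union>K. \<exists>N. \<forall>g\<in>nbhd n N. (\<lambda>m. f m + g m) \<in> \<Union>K"
  proof
    fix f assume "f \<in> \<Union>K"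
    then obtain U where "U \<in> K" "f \<in> U" by blast
    then obtain N where "\<forall>g\<in>nbhd n N. (\<lambda>m. f m + g m) \<in> U" using K by blast
    then show "\<exists>N. \<forall>g\<in>nbhd n N. (\<lambda>m. f m + g m) \<in> \<Union>K" using \<open>U \<in> K\<close> by blast
  qed
qed

lemma openin_deg: "openin (degtop n) U \<longleftrightarrow> U \<subseteq> SB n \<and>
      (\<forall>f\<in>U. \<exists>N. \<forall>g\<in>nbhd n N. (\<lambda>m. f m + g m) \<in> U)"
  unfolding degtop_def using topology_inverse'[OF istop_deg] by simp

lemma topspace_deg: "topspace (degtop n) = SB n"
proof -
  have "openin (degtop n) (SB n)"
    unfolding openin_deg using SB_add nbhd_SB by blast
  moreover have "\<And>U. openin (degtop n) U \<Longrightarrow> U \<subseteq> SB n" unfolding openin_deg by blast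
  ultimately show ?thesis unfolding topspace_def by blast
qed


lemma supp_mono: "supp (mono m) \<subseteq> {m}" by (auto simp: supp_def mono_def)
lemma supp_scal: "supp (scal c f) \<subseteq> supp f" by (auto simp: supp_def scal_def)

lemma smul_single:
  assumes "supp f \<subseteq> {a}" "supp g \<subseteq> {b}"
  shows "supp (smul B n f g) \<subseteq> {madd a b}"
proof
  fix m assume m: "m \<in> supp (smul B n f g)"
  show "m \<in> {madd a b}"
  proof (rule ccontr)
    assume "m \<notin> {madd a b}"
    then have "{(x, y). x \<in> supp f \<and> y \<in> supp g \<and> madd x y = m} = {}"
      using assms by auto
    then have "smul B n f g m = 0" unfolding smul_def by (simp only: sum.empty)
    then show False using m by (simp add: supp_def)
  qed
qed

lemma spow_single:
  assumes "supp x \<subseteq> {a}"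
  shows "supp (spow B n x k) \<subseteq> {(\<lambda>i. k * a i)}"
proof (induction k)
  case 0
  then show ?case by (simp add: spow_def sone_def supp_mono)
next
  case (Suc k)
  have "spow B n x (Suc k) = smul B n x (spow B n x k)" by (simp add: spow_def)
  moreover have "madd a (\<lambda>i. k * a i) = (\<lambda>i. Suc k * a i)" by (simp add: madd_def)
  ultimately show ?case using smul_single[OF assms Suc] by simp
qed

definition Mv :: "nat \<Rightarrow> (nat \<Rightarrow> nat \<Rightarrow> nat) \<Rightarrow> nat \<Rightarrow> mon \<Rightarrow> mon" where
  "Mv n' R n m = (\<lambda>l. \<Sum>i<n. m i * col R n' i l)"

lemma psi_mon_single_aux:
  "supp (foldl (\<lambda>acc i. smul B' n' acc (spow B' n' (nord B' n' (col R n' i)) (m i))) sone [0..<k])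
     \<subseteq> {Mv n' R k m}"
proof (induction k)
  case 0
  have "Mv n' R 0 m = (\<lambda>_. 0)" by (simp add: Mv_def)
  then show ?case by (simp add: sone_def supp_mono)
next
  case (Suc k)
  have a: "supp (nord B' n' (col R n' k)) \<subseteq> {col R n' k}"
    unfolding nord_def using supp_scal supp_mono by blast
  have "madd (Mv n' R k m) (\<lambda>i. m k * col R n' k i) = Mv n' R (Suc k) m"
    by (simp add: madd_def Mv_def)
  have b: "supp (spow B' n' (nord B' n' (col R n' k)) (m k)) \<subseteq> {(\<lambda>i. m k * col R n' k i)}"
    using spow_single[OF a] .
  show ?case using smul_single[OF Suc b, where B=B' and n=n'] \<open>madd _ _ = _\<close> by simp
qed

lemma psi_mon_single: "supp (psi_mon B' n' R n m) \<subseteq> {Mv n' R n m}"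
  unfolding psi_mon_def using psi_mon_single_aux .

lemma Mv_mons: "Mv n' R n m \<in> mons n'"
  by (simp add: Mv_def mons_def col_def)

lemma Mv_deg:
  assumes "\<forall>j<n. \<exists>i<n'. R i j \<noteq> 0"
  shows "mdeg n m \<le> mdeg n' (Mv n' R n m)"
proof -
  have "mdeg n' (Mv n' R n m) = (\<Sum>l<n'. \<Sum>i<n. m i * R l i)"
    by (simp add: mdeg_def Mv_def col_def)
  also have "\<dots> = (\<Sum>i<n. m i * (\<Sum>l<n'. R l i))"
    by (subst sum.swap) (simp add: sum_distrib_left)
  also have "\<dots> \<ge> (\<Sum>i<n. m i)"
  proof (rule sum_mono)
    fix i assume "i \<in> {..<n}"
    then obtain l where l: "l < n'" "R l i \<noteq> 0" using assms by auto
    have "R l i \<le> (\<Sum>l<n'. R l i)"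
      using l by (intro member_le_sum) auto
    then have "1 \<le> (\<Sum>l<n'. R l i)" using l by linarith
    then show "m i \<le> m i * (\<Sum>l<n'. R l i)" by simp
  qed
  finally show ?thesis by (simp add: mdeg_def)
qed

lemma psi_sub:
  assumes "finite S" "supp f \<subseteq> S"
  shows "psi B' n' R n f = (\<lambda>k. \<Sum>m\<in>S. f m * psi_mon B' n' R n m k)"
  unfolding psi_def
proof
  fix k
  show "(\<Sum>m\<in>supp f. f m * psi_mon B' n' R n m k) = (\<Sum>m\<in>S. f m * psi_mon B' n' R n m k)"
    using assms by (intro sum.mono_neutral_left) (auto simp: supp_def)
qed

lemma psi_supp: "supp (psi B' n' R n f) \<subseteq> Mv n' R n ` supp f"
proof
  fix k assume k: "k \<in> supp (psi B' n' R n f)"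
  show "k \<in> Mv n' R n ` supp f"
  proof (rule ccontr)
    assume nk: "k \<notin> Mv n' R n ` supp f"
    have "\<And>m. m \<in> supp f \<Longrightarrow> psi_mon B' n' R n m k = 0"
    proof -
      fix m assume "m \<in> supp f"
      then have "k \<noteq> Mv n' R n m" using nk by auto
      then show "psi_mon B' n' R n m k = 0" using psi_mon_single[of B' n' R n m]
        by (auto simp: supp_def)
    qed
    then have "psi B' n' R n f k = 0" unfolding psi_def by simp
    then show False using k by (simp add: supp_def)
  qed
qed

lemma psi_SB: "f \<in> SB n \<Longrightarrow> psi B' n' R n f \<in> SB n'"
  unfolding SB_def using psi_supp[of B' n' R n f] Mv_mons[of n' R n]
  by (auto intro: finite_subset)

lemma psi_nbhd:
  assumes "\<forall>j<n. \<exists>i<n'. R i j \<noteq> 0" "g \<in> nbhd n N"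
  shows "psi B' n' R n g \<in> nbhd n' N"
proof -
  have g: "g \<in> SB n" "\<forall>m\<in>supp g. N \<le> mdeg n m" using assms(2) by (auto simp: nbhd_def)
  have "\<forall>k\<in>supp (psi B' n' R n g). N \<le> mdeg n' k"
  proof
    fix k assume "k \<in> supp (psi B' n' R n g)"
    then obtain m where "m \<in> supp g" "k = Mv n' R n m" using psi_supp[of B' n' R n g] by auto
    then show "N \<le> mdeg n' k" using g(2) Mv_deg[OF assms(1), of m] by auto
  qed
  then show ?thesis using psi_SB[OF g(1)] by (simp add: nbhd_def)
qed

lemma psi_add:
  assumes "f \<in> SB n" "g \<in> SB n"
  shows "psi B' n' R n (\<lambda>m. f m + g m) = (\<lambda>k. psi B' n' R n f k + psi B' n' R n g k)"
proof -
  let ?S = "supp f \<union> supp g"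
  have fin: "finite ?S" using assms by (simp add: SB_def)
  show ?thesis
    unfolding psi_sub[OF fin supp_add] psi_sub[OF fin Un_upper1] psi_sub[OF fin Un_upper2]
    by (auto simp: sum.distrib distrib_right)
qed


lemma supp_sone: "supp sone = {(\<lambda>_. 0)}" by (auto simp: supp_def sone_def mono_def)

lemma smul_sone: "smul B n sone sone = sone"
proof
  fix m
  let ?z = "(\<lambda>_. 0) :: mon"
  show "smul B n sone sone m = sone m"
  proof (cases "m = ?z")
    case True
    have E: "{(a, b). a \<in> supp sone \<and> b \<in> supp sone \<and> madd a b = m} = {(?z, ?z)}"
      using True by (auto simp: supp_sone madd_def)
    have "twist B n ?z ?z = 1" by (simp add: twist_def)
    then show ?thesis unfolding smul_def E using True by (simp add: sone_def mono_def)
  next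
    case False
    have E: "{(a, b). a \<in> supp sone \<and> b \<in> supp sone \<and> madd a b = m} = {}"
      using False by (auto simp: supp_sone madd_def)
    show ?thesis unfolding smul_def E using False by (simp add: sone_def mono_def)
  qed
qed

lemma spow_sone: "spow B n sone k = sone"
  by (induction k) (simp_all add: spow_def smul_sone)

lemma psi_mon_zero_col:
  assumes "j < n" "\<forall>i<n'. R i j = 0"
  shows "psi_mon B' n' R n (\<lambda>i. if i = j then N else 0) = sone"
proof -
  let ?e = "(\<lambda>i. if i = j then N else 0) :: mon"
  have c: "col R n' j = (\<lambda>_. 0)" using assms(2) by (auto simp: col_def)
  have nz: "nord B' n' (col R n' j) = sone"
    unfolding c by (simp add: nord_def sone_def scal_def)
  have st: "spow B' n' (nord B' n' (col R n' i)) (?e i) = sone" for i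
    using nz spow_sone by (cases "i = j") (simp_all add: spow_def)
  have "foldl (\<lambda>acc i. smul B' n' acc (spow B' n' (nord B' n' (col R n' i)) (?e i))) sone [0..<k] = sone" for k
    by (induction k) (simp_all add: st smul_sone)
  then show ?thesis unfolding psi_mon_def .
qed


theorem proposition4p5:
  fixes n n' :: nat and B B' :: "nat \<Rightarrow> nat \<Rightarrow> int" and R :: "nat \<Rightarrow> nat \<Rightarrow> nat"
  assumes "skew_symmetric n B" and "skew_symmetric n' B'"
    and "\<forall>i<n. \<forall>j<n. (\<Sum>k<n'. \<Sum>l<n'. int (R k i) * B' k l * int (R l j)) = B i j"
  shows "continuous_map (degtop n) (degtop n') (psi B' n' R n)
     \<longleftrightarrow> (\<forall>j<n. \<exists>i<n'. R i j \<noteq> 0)"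
proof
  assume cm: "continuous_map (degtop n) (degtop n') (psi B' n' R n)"
  show "\<forall>j<n. \<exists>i<n'. R i j \<noteq> 0"
  proof (rule ccontr)
    assume "\<not> (\<forall>j<n. \<exists>i<n'. R i j \<noteq> 0)"
    then obtain j where j: "j < n" "\<forall>i<n'. R i j = 0" by auto
    have op: "openin (degtop n') (nbhd n' 1)"
      unfolding openin_deg
    proof (intro conjI ballI)
      show "nbhd n' 1 \<subseteq> SB n'" by (rule nbhd_SB)
      fix f assume f: "f \<in> nbhd n' 1"
      have "\<forall>g\<in>nbhd n' 1. (\<lambda>m. f m + g m) \<in> nbhd n' 1"
      proof
        fix g assume g: "g \<in> nbhd n' 1"
        show "(\<lambda>m. f m + g m) \<in> nbhd n' 1"
          using f g SB_add[of f n' g] supp_add[of f g] unfolding nbhd_def by blast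
      qed
      then show "\<exists>N. \<forall>g\<in>nbhd n' N. (\<lambda>m. f m + g m) \<in> nbhd n' 1" by blast
    qed
    let ?P = "{x \<in> topspace (degtop n). psi B' n' R n x \<in> nbhd n' 1}"
    have opP: "openin (degtop n) ?P" using cm op unfolding continuous_map_def by blast
    let ?zero = "(\<lambda>_. 0) :: elt"
    have sz: "supp ?zero = {}" by (simp add: supp_def)
    have z0: "?zero \<in> SB n" by (simp add: SB_def sz)
    have "psi B' n' R n ?zero = ?zero" by (simp add: psi_def sz)
    then have "?zero \<in> ?P" using z0 by (simp add: topspace_deg nbhd_def SB_def sz)
    then obtain N where N: "\<forall>g\<in>nbhd n N. (\<lambda>m. ?zero m + g m) \<in> ?P"
      using opP unfolding openin_deg by blast
    let ?e = "(\<lambda>i. if i = j then N else 0) :: mon"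
    have se: "supp (mono ?e) = {?e}" by (auto simp: supp_def mono_def)
    have "mdeg n ?e = N" using j(1) by (simp add: mdeg_def)
    then have "mono ?e \<in> nbhd n N" using j(1)
      by (simp add: nbhd_def SB_def se mons_def)
    then have "psi B' n' R n (mono ?e) \<in> nbhd n' 1" using N by simp
    moreover have "psi B' n' R n (mono ?e) = sone"
      unfolding psi_def se using psi_mon_zero_col[of j n n' R B' N, OF j] by (simp add: mono_def)
    moreover have "sone \<notin> nbhd n' 1" by (simp add: nbhd_def supp_sone mdeg_def)
    ultimately show False by simp
  qed
next
  assume cols: "\<forall>j<n. \<exists>i<n'. R i j \<noteq> 0"
  show "continuous_map (degtop n) (degtop n') (psi B' n' R n)"
    unfolding continuous_map_def
  proof (intro conjI allI impI)
    show "psi B' n' R n \<in> topspace (degtop n) \<rightarrow> topspace (degtop n')"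
      using psi_SB by (auto simp: topspace_deg)
    fix U assume U: "openin (degtop n') U"
    show "openin (degtop n) {x \<in> topspace (degtop n). psi B' n' R n x \<in> U}"
      unfolding openin_deg topspace_deg
    proof (intro conjI ballI)
      show "{x \<in> SB n. psi B' n' R n x \<in> U} \<subseteq> SB n" by blast
      fix f assume f: "f \<in> {x \<in> SB n. psi B' n' R n x \<in> U}"
      then obtain N where N: "\<forall>h\<in>nbhd n' N. (\<lambda>m. psi B' n' R n f m + h m) \<in> U"
        using U unfolding openin_deg by blast
      have "\<forall>g\<in>nbhd n N. (\<lambda>m. f m + g m) \<in> {x \<in> SB n. psi B' n' R n x \<in> U}"
      proof
        fix g assume g: "g \<in> nbhd n N"
        have gS: "g \<in> SB n" using g nbhd_SB by blast
        have "psi B' n' R n (\<lambda>m. f m + g m) = (\<lambda>k. psi B' n' R n f k + psi B' n' R n g k)"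
          using psi_add f gS by blast
        moreover have "psi B' n' R n g \<in> nbhd n' N" using psi_nbhd[OF cols g] .
        ultimately show "(\<lambda>m. f m + g m) \<in> {x \<in> SB n. psi B' n' R n x \<in> U}"
          using N SB_add[of f n g] f gS by auto
      qed
      then show "\<exists>N. \<forall>g\<in>nbhd n N. (\<lambda>m. f m + g m) \<in> {x \<in> SB n. psi B' n' R n x \<in> U}" by blast
    qed
  qed
qed

end
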